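(* Let $N\ge2$, and for $\bar x,\alpha\in\mathbb{R}$, $t\ge0$ define $$\Psi_L(\bar x,\alpha,t):=\alpha+\exp\!\left(-\tfrac{N-1}{N}t\right)(\bar x-\alpha).$$ Let $x(t)=(x_1(t),\dots,x_N(t))$, $x_i(t)\in\mathbb{R}$, be a (Carathéodory) solution of $$\dot x_i(t)=\frac1N\sum_{j=1}^N M_{ij}(t)(x_j-x_i),\qquad i=1,\dots,N,$$ with Lebesgue measurable $M_{ij}:[0,+\infty)\to[0,1]$, such that $x_i(0)\ge\alpha$ for all $i$, and let $\bar x\ge\alpha$. Let $T>0$. If there exist an index $I$ and a time $\tau\in[0,T]$ with $x_I(\tau)\ge\Psi_L(\bar x,\alpha,\tau)$, then $x_I(t)\ge\Psi_L(\bar x,\alpha,t)$ for all $t\ge\tau$. *)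

theory Defs
  imports "HOL-Analysis.Analysis"
begin

definition Psi_L :: "nat \<Rightarrow> real \<Rightarrow> real \<Rightarrow> real \<Rightarrow> real" where
  "Psi_L N xbar \<alpha> t = \<alpha> + exp (- ((real N - 1) / real N) * t) * (xbar - \<alpha>)"

text \<open>Right-hand side of the i-th equation (agents indexed 0..N-1).\<close>
definition rhs :: "nat \<Rightarrow> (nat \<Rightarrow> nat \<Rightarrow> real \<Rightarrow> real) \<Rightarrow> (nat \<Rightarrow> real \<Rightarrow> real) \<Rightarrow> nat \<Rightarrow> real \<Rightarrow> real" where
  "rhs N M x i s = (1 / real N) * (\<Sum>j<N. M i j s * (x j s - x i s))"

text \<open>Caratheodory solution on [0,+infinity): each component is absolutely continuous with
  derivative equal to the right-hand side almost everywhere, i.e. the right-hand side is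
  Lebesgue integrable on every [0,t] and x_i(t) = x_i(0) + integral of the rhs over [0,t].\<close>
definition caratheodory_solution ::
  "nat \<Rightarrow> (nat \<Rightarrow> nat \<Rightarrow> real \<Rightarrow> real) \<Rightarrow> (nat \<Rightarrow> real \<Rightarrow> real) \<Rightarrow> bool" where
  "caratheodory_solution N M x \<longleftrightarrow>
     (\<forall>i<N. \<forall>t\<ge>0. rhs N M x i absolutely_integrable_on {0..t} \<and>
        (rhs N M x i has_integral (x i t - x i 0)) {0..t})"

end

theory Submission
  imports Defs
begin

lemma first_zero:
  fixes w :: "'i \<Rightarrow> real \<Rightarrow> real"
  assumes fin: "finite J"
    and cont: "\<And>j b. j \<in> J \<Longrightarrow> continuous_on {a..b} (w j)"
    and pos: "\<And>j. j \<in> J \<Longrightarrow> w j a > 0"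
    and loc: "\<And>t i. t > a \<Longrightarrow> i \<in> J \<Longrightarrow> w i t = 0 \<Longrightarrow>
                 (\<And>s j. s \<in> {a..t} \<Longrightarrow> j \<in> J \<Longrightarrow> w j s \<ge> 0) \<Longrightarrow> False"
    and tj: "t \<ge> a" "j \<in> J"
  shows "w j t > 0"
proof (rule ccontr)
  assume neg: "\<not> w j t > 0"
  define S where "S = (\<Union>k\<in>J. {a..t} \<inter> w k -` {..0})"
  have clS: "closed S" unfolding S_def
    using fin by (intro closed_UN) (auto intro!: continuous_closed_preimage cont)
  have tS: "t \<in> S" using neg tj unfolding S_def by (auto simp: not_less)
  have bdd: "bdd_below S" unfolding S_def by (rule bdd_belowI[of _ a]) auto
  define t0 where "t0 = Inf S"
  have t0S: "t0 \<in> S" unfolding t0_def using clS tS bdd closed_contains_Inf by blast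
  have lower: "\<And>s. s \<in> S \<Longrightarrow> t0 \<le> s" unfolding t0_def using bdd by (simp add: cInf_lower)
  have t0a: "t0 \<ge> a" "t0 \<le> t" using t0S unfolding S_def by auto
  have notS: "\<And>s k. s \<in> {a..<t0} \<Longrightarrow> k \<in> J \<Longrightarrow> w k s > 0"
  proof (rule ccontr)
    fix s k assume "s \<in> {a..<t0}" "k \<in> J" "\<not> w k s > 0"
    then have "s \<in> S" using t0a unfolding S_def by (auto simp: not_less)
    with lower \<open>s \<in> {a..<t0}\<close> show False by force
  qed
  have zero: "w k s = 0 \<Longrightarrow> s \<in> {a..t0} \<Longrightarrow> k \<in> J \<Longrightarrow> s = t0" for k s
    using lower[of s] t0a unfolding S_def by force
  have nonneg: "w k t0 \<ge> 0" if k: "k \<in> J" for k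
  proof (rule ccontr)
    assume "\<not> w k t0 \<ge> 0"
    then obtain s where s: "s \<ge> a" "s \<le> t0" "w k s = 0"
      using IVT2'[of "w k" t0 0 a] pos[OF k] t0a cont[OF k] by force
    then have "s = t0" using zero k by auto
    with s \<open>\<not> w k t0 \<ge> 0\<close> show False by simp
  qed
  from t0S obtain i where i: "i \<in> J" "w i t0 \<le> 0" unfolding S_def by auto
  then have wi: "w i t0 = 0" using nonneg by force
  have "t0 \<noteq> a" using pos[OF i(1)] wi by auto
  then have "t0 > a" using t0a by simp
  show False
  proof (rule loc[OF \<open>t0 > a\<close> i(1) wi])
    fix s k assume "s \<in> {a..t0}" "k \<in> J"
    then show "w k s \<ge> 0" using notS nonneg by (cases "s = t0") (auto simp: less_imp_le)
  qed
qed

lemma sub_integral: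
  assumes C: "caratheodory_solution N M x" and i: "i < N" and u: "0 \<le> u" "u \<le> t"
  shows "(rhs N M x i has_integral (x i t - x i u)) {u..t}"
proof -
  have CC: "\<And>t. 0 \<le> t \<Longrightarrow> (rhs N M x i has_integral (x i t - x i 0)) {0..t}"
    using C i unfolding caratheodory_solution_def by blast
  have It: "(rhs N M x i has_integral (x i t - x i 0)) {0..t}" using CC u by simp
  have Iu: "(rhs N M x i has_integral (x i u - x i 0)) {0..u}" using CC u by simp
  have int: "rhs N M x i integrable_on {u..t}"
  proof (rule integrable_subinterval_real)
    show "rhs N M x i integrable_on {0..t}" using It by (rule has_integral_integrable)
    show "{u..t} \<subseteq> {0..t}" using u by simp
  qed
  then have Iut: "(rhs N M x i has_integral integral {u..t} (rhs N M x i)) {u..t}" by blast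
  have "(rhs N M x i has_integral (x i u - x i 0 + integral {u..t} (rhs N M x i))) {0..t}"
    using has_integral_combine[OF u Iu Iut] .
  then have "x i u - x i 0 + integral {u..t} (rhs N M x i) = x i t - x i 0"
    using It by (rule has_integral_unique)
  then have "integral {u..t} (rhs N M x i) = x i t - x i u" by simp
  then show ?thesis using Iut by simp
qed
lemma cont_x:
  assumes C: "caratheodory_solution N M x" and i: "i < N"
  shows "continuous_on {0..b} (x i)"
proof (cases "b \<ge> 0")
  case True
  have int: "rhs N M x i integrable_on {0..b}"
    using sub_integral[OF C i order_refl True] by (rule has_integral_integrable)
  have c1: "continuous_on {0..b} (\<lambda>s. integral {0..s} (rhs N M x i))"
    using int by (rule indefinite_integral_continuous_1)
  have c2: "continuous_on {0..b} (\<lambda>s. x i 0 + integral {0..s} (rhs N M x i))"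
    using c1 by (rule continuous_on_add[OF continuous_on_const])
  have eq: "x i 0 + integral {0..s} (rhs N M x i) = x i s" if s: "s \<in> {0..b}" for s
  proof -
    have "(rhs N M x i has_integral (x i s - x i 0)) {0..s}"
      using sub_integral[OF C i, of 0 s] s by simp
    then have "integral {0..s} (rhs N M x i) = x i s - x i 0" by (rule integral_unique)
    then show ?thesis by simp
  qed
  show ?thesis by (rule continuous_on_eq[OF c2 eq])
next
  case False then show ?thesis by simp
qed

lemma rhs_lower:
  assumes i: "i < N" and Mb: "\<And>j. j < N \<Longrightarrow> M i j s \<in> {0..1}"
    and xb: "\<And>j. j < N \<Longrightarrow> x j s \<ge> \<beta>"
  shows "rhs N M x i s \<ge> - ((real N - 1) / real N) * (x i s - \<beta>)"
proof -
  have Npos: "real N > 0" using i by simp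
  have "(\<Sum>j<N. M i j s * (x j s - x i s)) = (\<Sum>j\<in>{..<N} - {i}. M i j s * (x j s - x i s))"
    using sum.remove[of "{..<N}" i "\<lambda>j. M i j s * (x j s - x i s)"] i by simp
  also have "\<dots> \<ge> (\<Sum>j\<in>{..<N} - {i}. - (x i s - \<beta>))"
  proof (rule sum_mono)
    fix j assume j: "j \<in> {..<N} - {i}"
    have m: "0 \<le> M i j s" "M i j s \<le> 1" using Mb[of j] j by auto
    have "x j s - x i s \<ge> - (x i s - \<beta>)" using xb[of j] j by auto
    then have "M i j s * (x j s - x i s) \<ge> M i j s * (- (x i s - \<beta>))"
      using m by (simp add: mult_left_mono)
    moreover have "M i j s * (x i s - \<beta>) \<le> (x i s - \<beta>)"
      using m xb[OF i] by (intro mult_left_le_one_le) auto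
    then have "M i j s * (- (x i s - \<beta>)) \<ge> - (x i s - \<beta>)" by (simp add: algebra_simps)
    ultimately show "- (x i s - \<beta>) \<le> M i j s * (x j s - x i s)" by linarith
  qed
  also have "(\<Sum>j\<in>{..<N} - {i}. - (x i s - \<beta>)) = real (card ({..<N} - {i})) * (- (x i s - \<beta>))"
    by (rule sum_constant)
  also have "real (card ({..<N} - {i})) = real N - 1"
    using i by (simp add: card_Diff_singleton of_nat_diff)
  finally have "(\<Sum>j<N. M i j s * (x j s - x i s)) \<ge> (real N - 1) * (- (x i s - \<beta>))" .
  then have "(\<Sum>j<N. M i j s * (x j s - x i s)) \<ge> - (real N - 1) * (x i s - \<beta>)"
    by (simp only: mult_minus_left mult_minus_right)
  then have "(1 / real N) * (\<Sum>j<N. M i j s * (x j s - x i s)) \<ge> (1 / real N) * (- (real N - 1) * (x i s - \<beta>))"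
    using Npos by (intro mult_left_mono) auto
  moreover have "(1 / real N) * (- (real N - 1) * (x i s - \<beta>)) = - ((real N - 1) / real N) * (x i s - \<beta>)"
  proof -
    have "(1 / real N) * (- (real N - 1) * (x i s - \<beta>)) = - ((1 / real N) * (real N - 1)) * (x i s - \<beta>)"
      by (simp only: mult_minus_left mult_minus_right mult.assoc)
    also have "(1 / real N) * (real N - 1) = (real N - 1) / real N" by simp
    finally show ?thesis .
  qed
  ultimately show ?thesis unfolding rhs_def by linarith
qed


lemma exp_incr:
  fixes u d :: real assumes "0 \<le> u" "0 \<le> d"
  shows "exp (u + d) - exp u \<ge> d"
proof -
  have e1: "exp u \<ge> 1" using assms by simp
  have "exp (u + d) = exp u * exp d" by (rule exp_add)
  also have "\<dots> \<ge> exp u * (1 + d)"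
    using e1 exp_ge_add_one_self[of d] by (intro mult_left_mono) auto
  finally have "exp (u + d) \<ge> exp u + d * exp u" by (simp add: algebra_simps)
  moreover have "d * exp u \<ge> d" using e1 assms(2) by (simp add: mult_le_cancel_left1)
  ultimately show ?thesis by linarith
qed

lemma lower_alpha:
  assumes C: "caratheodory_solution N M x"
    and Mb: "\<And>i j t. i < N \<Longrightarrow> j < N \<Longrightarrow> t \<ge> 0 \<Longrightarrow> M i j t \<in> {0..1}"
    and x0: "\<And>i. i < N \<Longrightarrow> x i 0 \<ge> \<alpha>"
    and j: "j < N" and t: "t \<ge> 0"
  shows "x j t \<ge> \<alpha>"
proof -
  have key: "x j t - \<alpha> + \<epsilon> * exp t > 0" if ep: "\<epsilon> > 0" for \<epsilon>
  proof -
    define w where "w = (\<lambda>j s. x j s - \<alpha> + \<epsilon> * exp s)"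
    have cw: "continuous_on {0..b} (w k)" if "k \<in> {..<N}" for k b
      unfolding w_def using cont_x[OF C, of k b] that
      by (intro continuous_intros) auto
    have pw: "w k 0 > 0" if "k \<in> {..<N}" for k
      using x0[of k] that ep unfolding w_def by auto
    have "w j t > 0"
    proof (rule first_zero[of "{..<N}" 0 w, OF _ cw pw _ t])
      show "finite {..<N}" by simp
      show "j \<in> {..<N}" using j by simp
    next
      fix t0 i
      assume t0: "0 < t0" and i: "i \<in> {..<N}" and wz: "w i t0 = 0"
        and nn: "\<And>s k. s \<in> {0..t0} \<Longrightarrow> k \<in> {..<N} \<Longrightarrow> 0 \<le> w k s"
      have "continuous_on {0..t0} (w i)" using cw[OF i] .
      then obtain d where d: "d > 0" and
        dd: "\<And>s. s \<in> {0..t0} \<Longrightarrow> dist s t0 < d \<Longrightarrow> dist (w i s) (w i t0) < \<epsilon> / 2"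
        unfolding continuous_on_iff using t0 ep
        by (metis atLeastAtMost_iff half_gt_zero less_eq_real_def order_refl)
      define \<delta> where "\<delta> = min (d / 2) t0"
      define u where "u = t0 - \<delta>"
      have dpos: "\<delta> > 0" using d t0 unfolding \<delta>_def by simp
      have u0: "0 \<le> u" "u \<le> t0" using dpos unfolding u_def \<delta>_def by auto
      have small: "w i s < \<epsilon> / 2" if s: "s \<in> {u..t0}" for s
      proof -
        have "s \<in> {0..t0}" using s u0 by auto
        moreover have "dist s t0 < d" using s d dpos unfolding u_def \<delta>_def dist_real_def by auto
        ultimately have "dist (w i s) (w i t0) < \<epsilon> / 2" by (rule dd)
        then show ?thesis using wz by (simp add: dist_real_def)
      qed
      have lowr: "- (\<epsilon> / 2) \<le> rhs N M x i s" if s: "s \<in> {u..t0}" for s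
      proof -
        have s0: "s \<in> {0..t0}" "s \<ge> 0" using s u0 by auto
        have "rhs N M x i s \<ge> - ((real N - 1) / real N) * (x i s - (\<alpha> - \<epsilon> * exp s))"
        proof (rule rhs_lower)
          show "i < N" using i by simp
          show "\<And>k. k < N \<Longrightarrow> M i k s \<in> {0..1}" using Mb i s0 by auto
          show "\<And>k. k < N \<Longrightarrow> \<alpha> - \<epsilon> * exp s \<le> x k s"
            using nn[OF s0(1)] unfolding w_def by (simp add: algebra_simps)
        qed
        moreover have "x i s - (\<alpha> - \<epsilon> * exp s) = w i s" unfolding w_def by simp
        moreover have "0 \<le> w i s" using nn[OF s0(1) i] .
        moreover have N1: "real N \<ge> 1" using i by simp
        then have "0 \<le> (real N - 1) / real N" "(real N - 1) / real N \<le> 1"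
          by (simp_all add: divide_le_eq)
        then have "(real N - 1) / real N * w i s \<le> w i s"
          using nn[OF s0(1) i] by (intro mult_left_le_one_le) auto
        ultimately have "rhs N M x i s \<ge> - w i s"
          by (metis (no_types, lifting) minus_le_iff mult_minus_left order_trans)
        then show ?thesis using small[OF s] by linarith
      qed
      have I1: "(rhs N M x i has_integral (x i t0 - x i u)) {u..t0}"
        using sub_integral[OF C _ u0] i by simp
      note I2 = has_integral_const_real[of "- (\<epsilon> / 2)" u t0]
      have "\<And>s. s \<in> {u..t0} \<Longrightarrow> - (\<epsilon> / 2) \<le> rhs N M x i s" by (rule lowr)
      note le = has_integral_le[OF I2 I1 this]
      from le have xd: "x i t0 - x i u \<ge> - \<delta> * (\<epsilon> / 2)"
        using u0 unfolding u_def by simp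
      have ed: "exp t0 - exp u \<ge> \<delta>"
        using exp_incr[of u \<delta>] u0 dpos unfolding u_def by simp
      have "w i t0 - w i u = (x i t0 - x i u) + \<epsilon> * (exp t0 - exp u)"
        unfolding w_def by (simp add: algebra_simps)
      also have "\<dots> \<ge> - \<delta> * (\<epsilon> / 2) + \<epsilon> * \<delta>"
        using xd ed ep by (smt (verit) mult_left_mono)
      finally have "w i t0 - w i u \<ge> \<epsilon> * \<delta> / 2" by (simp add: mult.commute)
      moreover have "\<epsilon> * \<delta> / 2 > 0" using ep dpos by simp
      moreover have "w i u \<ge> 0" using nn[of u i] u0 i by simp
      ultimately show False using wz by linarith
    qed
    then show ?thesis unfolding w_def .
  qed
  show ?thesis
  proof (rule ccontr)
    assume "\<not> \<alpha> \<le> x j t"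
    then have pos: "(\<alpha> - x j t) / (2 * exp t) > 0" by simp
    have k: "0 < x j t - \<alpha> + ((\<alpha> - x j t) / (2 * exp t)) * exp t" by (rule key[OF pos])
    have "((\<alpha> - x j t) / (2 * exp t)) * exp t = (\<alpha> - x j t) / 2" by simp
    then have "0 < x j t - \<alpha> + (\<alpha> - x j t) / 2" using k by simp
    then show False using \<open>\<not> \<alpha> \<le> x j t\<close> by (simp add: field_simps)
  qed
qed


theorem proposition4:
  fixes N :: nat and M :: "nat \<Rightarrow> nat \<Rightarrow> real \<Rightarrow> real" and x :: "nat \<Rightarrow> real \<Rightarrow> real"
    and xbar \<alpha> T \<tau> :: real and I :: nat
  assumes "N \<ge> 2"
    and "\<And>i j. i < N \<Longrightarrow> j < N \<Longrightarrow> M i j \<in> borel_measurable (lebesgue_on {0..})"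
    and "\<And>i j t. i < N \<Longrightarrow> j < N \<Longrightarrow> t \<ge> 0 \<Longrightarrow> M i j t \<in> {0..1}"
    and "caratheodory_solution N M x"
    and "\<And>i. i < N \<Longrightarrow> x i 0 \<ge> \<alpha>"
    and "xbar \<ge> \<alpha>"
    and "T > 0"
    and "I < N" and "\<tau> \<in> {0..T}"
    and "x I \<tau> \<ge> Psi_L N xbar \<alpha> \<tau>"
  shows "\<forall>t\<ge>\<tau>. x I t \<ge> Psi_L N xbar \<alpha> t"
proof -
  note Mb = assms(3) and C = assms(4) and x0 = assms(5) and Iok = assms(8)
  have tau0: "\<tau> \<ge> 0" using assms(9) by simp
  define c where "c = (real N - 1) / real N"
  define D where "D = xbar - \<alpha>"
  define P where "P = (\<lambda>s. \<alpha> + D * exp (- c * s))"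
  have PP: "Psi_L N xbar \<alpha> s = P s" for s
    unfolding Psi_L_def P_def c_def D_def by (simp add: mult.commute)
  have D0: "D \<ge> 0" using assms(6) unfolding D_def by simp
  have N1: "real N \<ge> 1" using Iok by simp
  then have c01: "0 \<le> c" "c \<le> 1" unfolding c_def by (simp_all add: divide_le_eq)
  have xa: "\<And>j s. j < N \<Longrightarrow> s \<ge> 0 \<Longrightarrow> x j s \<ge> \<alpha>"
    using lower_alpha[OF C Mb x0] by blast
  have xtau: "x I \<tau> \<ge> P \<tau>" using assms(10) PP by simp
  have key: "x I t - P t + \<epsilon> * exp t > 0" if ep: "\<epsilon> > 0" and tt: "t \<ge> \<tau>" for \<epsilon> t
  proof -
    define w where "w = (\<lambda>(k::nat) s. x I s - P s + \<epsilon> * exp s)"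
    have cw: "continuous_on {\<tau>..b} (w k)" for k b
    proof -
      have "continuous_on {\<tau>..b} (x I)"
        using cont_x[OF C Iok, of b] by (rule continuous_on_subset) (use tau0 in auto)
      then show ?thesis unfolding w_def P_def by (intro continuous_intros)
    qed
    have pw: "w k \<tau> > 0" for k
    proof -
      have "\<epsilon> * exp \<tau> > 0" using ep by simp
      then show ?thesis using xtau unfolding w_def by linarith
    qed
    have "w 0 t > 0"
    proof (rule first_zero[of "{0::nat}" \<tau> w, OF _ cw pw _ tt])
      show "finite {0::nat}" by simp
      show "(0::nat) \<in> {0}" by simp
    next
      fix t0 i
      assume t0: "\<tau> < t0" and i: "i \<in> {0::nat}" and wz: "w i t0 = 0"
        and nn: "\<And>s k. s \<in> {\<tau>..t0} \<Longrightarrow> k \<in> {0::nat} \<Longrightarrow> 0 \<le> w k s"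
      have "continuous_on {\<tau>..t0} (w i)" using cw .
      then obtain d where d: "d > 0" and
        dd: "\<And>s. s \<in> {\<tau>..t0} \<Longrightarrow> dist s t0 < d \<Longrightarrow> dist (w i s) (w i t0) < \<epsilon> / 2"
        unfolding continuous_on_iff using t0 ep
        by (metis atLeastAtMost_iff half_gt_zero less_eq_real_def order_refl)
      define \<delta> where "\<delta> = min (d / 2) (t0 - \<tau>)"
      define u where "u = t0 - \<delta>"
      have dpos: "\<delta> > 0" using d t0 unfolding \<delta>_def by simp
      have u0: "\<tau> \<le> u" "u \<le> t0" using dpos unfolding u_def \<delta>_def by auto
      have small: "w i s < \<epsilon> / 2" if s: "s \<in> {u..t0}" for s
      proof -
        have "s \<in> {\<tau>..t0}" using s u0 by auto
        moreover have "dist s t0 < d" using s d dpos unfolding u_def \<delta>_def dist_real_def by auto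
        ultimately have "dist (w i s) (w i t0) < \<epsilon> / 2" by (rule dd)
        then show ?thesis using wz by (simp add: dist_real_def)
      qed
      have lowr: "- (\<epsilon> / 2) - c * D * exp (- c * s) \<le> rhs N M x I s" if s: "s \<in> {u..t0}" for s
      proof -
        have s0: "s \<in> {\<tau>..t0}" "s \<ge> 0" using s u0 tau0 by auto
        have r1: "rhs N M x I s \<ge> - c * (x I s - \<alpha>)"
          unfolding c_def
        proof (rule rhs_lower)
          show "I < N" using Iok .
          show "\<And>k. k < N \<Longrightarrow> M I k s \<in> {0..1}" using Mb Iok s0 by auto
          show "\<And>k. k < N \<Longrightarrow> \<alpha> \<le> x k s" using xa s0 by auto
        qed
        have e0: "\<epsilon> * exp s \<ge> 0" using ep by simp
        have "x I s - \<alpha> = w i s + D * exp (- c * s) - \<epsilon> * exp s"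
          unfolding w_def P_def by simp
        then have "x I s - \<alpha> \<le> \<epsilon> / 2 + D * exp (- c * s)"
          using small[OF s] e0 by linarith
        then have "c * (x I s - \<alpha>) \<le> c * (\<epsilon> / 2 + D * exp (- c * s))"
          using c01 by (intro mult_left_mono) auto
        also have "\<dots> = c * (\<epsilon> / 2) + c * D * exp (- c * s)" by (simp add: algebra_simps)
        also have "c * (\<epsilon> / 2) \<le> \<epsilon> / 2"
          using c01 ep by (intro mult_left_le_one_le) auto
        then have "c * (\<epsilon> / 2) + c * D * exp (- c * s) \<le> \<epsilon> / 2 + c * D * exp (- c * s)" by simp
        finally have "c * (x I s - \<alpha>) \<le> \<epsilon> / 2 + c * D * exp (- c * s)" .
        then show ?thesis using r1 by simp
      qed
      define F where "F = (\<lambda>s. - (\<epsilon> / 2) * s + D * exp (- c * s))"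
      have dF: "(F has_vector_derivative (- (\<epsilon> / 2) - c * D * exp (- c * s))) (at s within {u..t0})" for s
      proof -
        have "(F has_real_derivative (- (\<epsilon> / 2) - c * D * exp (- c * s))) (at s within {u..t0})"
          unfolding F_def by (auto intro!: derivative_eq_intros simp: algebra_simps)
        then show ?thesis by (simp add: has_real_derivative_iff_has_vector_derivative)
      qed
      have I2: "((\<lambda>s. - (\<epsilon> / 2) - c * D * exp (- c * s)) has_integral (F t0 - F u)) {u..t0}"
        using fundamental_theorem_of_calculus[OF u0(2) dF] .
      have I1: "(rhs N M x I has_integral (x I t0 - x I u)) {u..t0}"
        using sub_integral[OF C Iok] u0 tau0 by simp
      have le: "F t0 - F u \<le> x I t0 - x I u"
        using has_integral_le[OF I2 I1] lowr by blast
      have ed: "exp t0 - exp u \<ge> \<delta>"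
        using exp_incr[of u \<delta>] u0 dpos tau0 unfolding u_def by simp
      have ed2: "\<epsilon> * (exp t0 - exp u) \<ge> \<epsilon> * \<delta>"
        using ed ep by (intro mult_left_mono) auto
      have i0: "i = 0" using i by simp
      have "w i t0 - w i u = (x I t0 - x I u) - D * exp (- c * t0) + D * exp (- c * u) + \<epsilon> * (exp t0 - exp u)"
        unfolding w_def P_def by (simp add: algebra_simps)
      moreover have "F t0 - F u = - (\<epsilon> / 2) * \<delta> + D * exp (- c * t0) - D * exp (- c * u)"
        unfolding F_def u_def by (simp add: field_simps)
      ultimately have "w i t0 - w i u \<ge> \<epsilon> * \<delta> - (\<epsilon> / 2) * \<delta>"
        using le ed2 by linarith
      moreover have "\<epsilon> * \<delta> - (\<epsilon> / 2) * \<delta> > 0" using ep dpos by simp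
      moreover have "w i u \<ge> 0" using nn[of u i] u0 i by simp
      ultimately show False using wz by linarith
    qed
    then show ?thesis unfolding w_def .
  qed
  show ?thesis
  proof (intro allI impI)
    fix t assume tt: "\<tau> \<le> t"
    show "Psi_L N xbar \<alpha> t \<le> x I t"
    proof (rule ccontr)
      assume "\<not> Psi_L N xbar \<alpha> t \<le> x I t"
      then have lt: "x I t < P t" using PP by simp
      then have pos: "(P t - x I t) / (2 * exp t) > 0" by simp
      have k: "0 < x I t - P t + ((P t - x I t) / (2 * exp t)) * exp t" by (rule key[OF pos tt])
      have "((P t - x I t) / (2 * exp t)) * exp t = (P t - x I t) / 2" by simp
      then have "0 < x I t - P t + (P t - x I t) / 2" using k by simp
      then show False using lt by (simp add: field_simps)
    qed
  qed
qed

end
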